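(* Let $\varphi:\mathbb{R}^n\to\mathbb{R}$ be concave and increasing. For any $\vec q_0\in\mathbb{R}^n$, the function $C:\mathbb{R}^n\to\mathbb{R}$, \[C(\vec q)=\inf\{c\in\mathbb{R}\mid \varphi(c\mathbf 1-\vec q)\ge\varphi(\vec q_0)\},\] is convex, increasing and $\mathbf 1$-invariant. Furthermore, for every history $h\in\mathsf{ValHist}_\varphi((\vec q_0))$ we have $\mathsf{ValTrades}'_C(h)=\mathsf{ValTrades}_\varphi(h)$.
   Context: $\mathbf 1=(1,\dots,1)\in\mathbb{R}^n$. A function $f$ is $\mathbf 1$-invariant if $f(\vec q+\alpha\mathbf 1)=f(\vec q)+\alpha$ for all $\vec q,\alpha$; increasing if $f(\vec q)>f(\vec q')$ whenever $\vec q\succeq\vec q'$ coordinatewise and $\vec q\neq\vec q'$. A history $h$ is a finite list of vectors in $\mathbb{R}^n$, $\vec q_h$ is their sum, and $h\oplus\vec r$ is $h$ with $\vec r$ appended. The CFMM for $\varphi$ is $\mathsf{ValTrades}_\varphi(h)=\{\vec r\mid\varphi(\vec q_h+\vec r)=\varphi(\vec q_h)\}$, and $\mathsf{ValHist}_\varphi((\vec q_0))$ is the smallest set of histories containing the one-element history $(\vec q_0)$ and closed under $h\mapsto h\oplus\vec r$ for $\vec r\in\mathsf{ValTrades}_\varphi(h)$. The cashless cost-function market maker for $C$ is $\mathsf{ValTrades}'_C(h)=\{\vec r+\alpha\mathbf 1\mid\vec r\in\mathbb{R}^n,\ \alpha=C(-\vec q_h-\vec r)-C(-\vec q_h)\}$.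 *)

theory Defs
  imports "HOL-Analysis.Analysis"
begin

definition onevec :: "real ^ 'n" where
  "onevec = (\<chi> i. 1)"

definition one_invariant :: "(real ^ 'n \<Rightarrow> real) \<Rightarrow> bool" where
  "one_invariant f \<longleftrightarrow> (\<forall>q \<alpha>. f (q + \<alpha> *\<^sub>R onevec) = f q + \<alpha>)"

definition increasing_fun :: "(real ^ 'n \<Rightarrow> real) \<Rightarrow> bool" where
  "increasing_fun f \<longleftrightarrow>
     (\<forall>q q'. (\<forall>i. q $ i \<ge> q' $ i) \<and> q \<noteq> q' \<longrightarrow> f q > f q')"

text \<open>A history is a finite list of vectors; its position is their sum.\<close>
definition qh :: "(real ^ 'n) list \<Rightarrow> real ^ 'n" where
  "qh h = sum_list h"

definition ValTrades :: "(real ^ 'n \<Rightarrow> real) \<Rightarrow> (real ^ 'n) list \<Rightarrow> (real ^ 'n) set" where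
  "ValTrades \<phi> h = {r. \<phi> (qh h + r) = \<phi> (qh h)}"

inductive_set ValHist :: "(real ^ 'n \<Rightarrow> real) \<Rightarrow> real ^ 'n \<Rightarrow> (real ^ 'n) list set"
  for \<phi> :: "real ^ 'n \<Rightarrow> real" and q0 :: "real ^ 'n" where
  init: "[q0] \<in> ValHist \<phi> q0"
| step: "h \<in> ValHist \<phi> q0 \<Longrightarrow> r \<in> ValTrades \<phi> h \<Longrightarrow> h @ [r] \<in> ValHist \<phi> q0"

definition ValTrades' :: "(real ^ 'n \<Rightarrow> real) \<Rightarrow> (real ^ 'n) list \<Rightarrow> (real ^ 'n) set" where
  "ValTrades' C h = {r + \<alpha> *\<^sub>R onevec | r \<alpha>. \<alpha> = C (- qh h - r) - C (- qh h)}"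

definition costfun :: "(real ^ 'n \<Rightarrow> real) \<Rightarrow> real ^ 'n \<Rightarrow> real ^ 'n \<Rightarrow> real" where
  "costfun \<phi> q0 q = Inf {c :: real. \<phi> (c *\<^sub>R onevec - q) \<ge> \<phi> q0}"

end

theory Submission
  imports Defs
begin

lemma onevec_nth[simp]: "onevec $ i = 1"
  by (simp add: onevec_def)

lemma onevec_nz: "onevec \<noteq> 0"
  by (metis onevec_nth zero_index zero_neq_one)

lemma mono_phi:
  assumes "increasing_fun \<phi>" "\<forall>i. x $ i \<le> y $ i"
  shows "\<phi> x \<le> \<phi> y"
  using assms unfolding increasing_fun_def
  by (cases "x = y") (auto intro: less_imp_le)

lemma strict_line:
  assumes "increasing_fun \<phi>" "(c::real) < d"
  shows "\<phi> (c *\<^sub>R onevec - q) < \<phi> (d *\<^sub>R onevec - q)"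
proof -
  have "(d *\<^sub>R onevec - q) \<noteq> (c *\<^sub>R onevec - q)"
  proof
    assume "d *\<^sub>R onevec - q = c *\<^sub>R onevec - q"
    then show False using assms(2) by (auto simp: vec_eq_iff)
  qed
  moreover have "\<forall>i. (d *\<^sub>R onevec - q) $ i \<ge> (c *\<^sub>R onevec - q) $ i"
    using assms(2) by simp
  ultimately show ?thesis using assms(1) unfolding increasing_fun_def by blast
qed

lemma cont_phi:
  assumes "concave_on UNIV \<phi>"
  shows "continuous_on UNIV (\<phi> :: real ^ 'n \<Rightarrow> real)"
proof -
  have "continuous_on UNIV (\<lambda>x. - \<phi> x)"
    using assms convex_on_continuous[of UNIV "\<lambda>x. - \<phi> x"] by (simp add: concave_on_def)
  from continuous_on_minus[OF this] show ?thesis by simp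
qed

lemma exists_level:
  fixes \<phi> :: "real ^ 'n \<Rightarrow> real"
  assumes "concave_on UNIV \<phi>" "increasing_fun \<phi>"
  shows "\<exists>c. \<phi> (c *\<^sub>R onevec - q) = \<phi> q0"
proof -
  define U where "U = norm q0 + norm q"
  have c: "continuous_on {-U..U} (\<lambda>c. \<phi> (c *\<^sub>R onevec - q))"
    by (rule continuous_on_compose2[OF cont_phi[OF assms(1)]]) (auto intro!: continuous_intros)
  have "\<phi> ((-U) *\<^sub>R onevec - q) \<le> \<phi> q0"
  proof (rule mono_phi[OF assms(2)], intro allI)
    fix i
    have "\<bar>q0 $ i\<bar> \<le> norm q0" "\<bar>q $ i\<bar> \<le> norm q" by (simp_all add: component_le_norm_cart)
    then show "((-U) *\<^sub>R onevec - q) $ i \<le> q0 $ i" unfolding U_def by auto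
  qed
  moreover have "\<phi> q0 \<le> \<phi> (U *\<^sub>R onevec - q)"
  proof (rule mono_phi[OF assms(2)], intro allI)
    fix i
    have "\<bar>q0 $ i\<bar> \<le> norm q0" "\<bar>q $ i\<bar> \<le> norm q" by (simp_all add: component_le_norm_cart)
    then show "q0 $ i \<le> (U *\<^sub>R onevec - q) $ i" unfolding U_def by auto
  qed
  moreover have "-U \<le> U" unfolding U_def by simp
  ultimately show ?thesis using IVT'[OF _ _ _ c] by blast
qed

lemma costfun_char:
  fixes \<phi> :: "real ^ 'n \<Rightarrow> real"
  assumes "concave_on UNIV \<phi>" "increasing_fun \<phi>"
  shows "\<phi> (c *\<^sub>R onevec - q) = \<phi> q0 \<longleftrightarrow> costfun \<phi> q0 q = c"
proof -
  obtain c0 where c0: "\<phi> (c0 *\<^sub>R onevec - q) = \<phi> q0" using exists_level[OF assms] by blast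
  have le: "\<phi> (d *\<^sub>R onevec - q) \<ge> \<phi> q0 \<longleftrightarrow> d \<ge> c0" for d
    using strict_line[OF assms(2), of d c0 q] strict_line[OF assms(2), of c0 d q] c0
    by (cases d c0 rule: linorder_cases) auto
  have "{d. \<phi> (d *\<^sub>R onevec - q) \<ge> \<phi> q0} = {c0..}" using le by auto
  then have C: "costfun \<phi> q0 q = c0" unfolding costfun_def by simp
  have "\<phi> (c *\<^sub>R onevec - q) = \<phi> q0 \<longleftrightarrow> c = c0"
    using strict_line[OF assms(2), of c c0 q] strict_line[OF assms(2), of c0 c q] c0
    by (cases c c0 rule: linorder_cases) auto
  then show ?thesis using C by auto
qed

lemma costfun_level:
  fixes \<phi> :: "real ^ 'n \<Rightarrow> real"
  assumes "concave_on UNIV \<phi>" "increasing_fun \<phi>"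
  shows "\<phi> (costfun \<phi> q0 q *\<^sub>R onevec - q) = \<phi> q0"
  using costfun_char[OF assms] by blast

lemma hist_level:
  assumes "h \<in> ValHist \<phi> q0"
  shows "\<phi> (qh h) = \<phi> q0"
  using assms
  by induction (auto simp: qh_def ValTrades_def)

theorem theorem3p4:
  fixes \<phi> :: "real ^ 'n \<Rightarrow> real" and q0 :: "real ^ 'n"
  assumes "concave_on UNIV \<phi>" and "increasing_fun \<phi>"
  shows "convex_on UNIV (costfun \<phi> q0) \<and> increasing_fun (costfun \<phi> q0)
         \<and> one_invariant (costfun \<phi> q0)
         \<and> (\<forall>h \<in> ValHist \<phi> q0. ValTrades' (costfun \<phi> q0) h = ValTrades \<phi> h)"
proof (intro conjI ballI)
  let ?C = "costfun \<phi> q0"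
  note lev = costfun_level[OF assms, of q0]
  note chr = costfun_char[OF assms, of _ _ q0]
  show "convex_on UNIV ?C"
  proof (rule convex_onI)
    fix t :: real and x y :: "real ^ 'n"
    assume t: "0 < t" "t < 1"
    define c where "c = (1 - t) * ?C x + t * ?C y"
    have "\<phi> (c *\<^sub>R onevec - ((1 - t) *\<^sub>R x + t *\<^sub>R y))
        = \<phi> ((1 - t) *\<^sub>R (?C x *\<^sub>R onevec - x) + t *\<^sub>R (?C y *\<^sub>R onevec - y))"
      unfolding c_def by (simp add: algebra_simps)
    also have "\<dots> \<ge> (1 - t) * \<phi> (?C x *\<^sub>R onevec - x) + t * \<phi> (?C y *\<^sub>R onevec - y)"
      using concave_onD[OF assms(1), of t] t by auto
    finally have ge: "\<phi> (c *\<^sub>R onevec - ((1 - t) *\<^sub>R x + t *\<^sub>R y)) \<ge> \<phi> q0"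
      using lev[of x] lev[of y] by (simp add: algebra_simps)
    let ?z = "(1 - t) *\<^sub>R x + t *\<^sub>R y"
    show "?C ?z \<le> (1 - t) * ?C x + t * ?C y"
    proof (rule ccontr)
      assume "\<not> ?thesis"
      then have "c < ?C ?z" unfolding c_def by simp
      from strict_line[OF assms(2) this, of ?z] lev[of ?z] ge show False by simp
    qed
  qed simp
  show "increasing_fun ?C"
    unfolding increasing_fun_def
  proof (intro allI impI)
    fix q q' :: "real ^ 'n"
    assume a: "(\<forall>i. q' $ i \<le> q $ i) \<and> q \<noteq> q'"
    let ?c = "?C q"
    have "\<phi> (?c *\<^sub>R onevec - q') > \<phi> (?c *\<^sub>R onevec - q)"
      using a assms(2) unfolding increasing_fun_def
      by (metis (no_types, lifting) diff_left_imp_eq diff_left_mono vector_minus_component)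
    then have g: "\<phi> (?c *\<^sub>R onevec - q') > \<phi> q0" using lev[of q] by simp
    show "?C q' < ?C q"
    proof (rule ccontr)
      assume "\<not> ?thesis"
      then have "?c \<le> ?C q'" by simp
      then have "\<phi> (?c *\<^sub>R onevec - q') \<le> \<phi> (?C q' *\<^sub>R onevec - q')"
        by (intro mono_phi[OF assms(2)]) auto
      then show False using g lev[of q'] by simp
    qed
  qed
  show "one_invariant ?C"
    unfolding one_invariant_def
  proof (intro allI)
    fix q :: "real ^ 'n" and \<alpha> :: real
    have "\<phi> ((?C q + \<alpha>) *\<^sub>R onevec - (q + \<alpha> *\<^sub>R onevec)) = \<phi> q0"
      using lev[of q] by (simp add: algebra_simps)
    then show "?C (q + \<alpha> *\<^sub>R onevec) = ?C q + \<alpha>" using chr by blast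
  qed
  fix h assume h: "h \<in> ValHist \<phi> q0"
  have hl: "\<phi> (qh h) = \<phi> q0" using hist_level[OF h] .
  have C0: "?C (- qh h) = 0" using chr[of 0 "- qh h"] hl by simp
  show "ValTrades' ?C h = ValTrades \<phi> h"
  proof
    show "ValTrades' ?C h \<subseteq> ValTrades \<phi> h"
    proof
      fix s assume "s \<in> ValTrades' ?C h"
      then obtain r where s: "s = r + ?C (- qh h - r) *\<^sub>R onevec"
        unfolding ValTrades'_def using C0 by auto
      have "\<phi> (qh h + s) = \<phi> (?C (- qh h - r) *\<^sub>R onevec - (- qh h - r))"
        unfolding s by (simp add: algebra_simps)
      also have "\<dots> = \<phi> q0" by (rule lev)
      finally show "s \<in> ValTrades \<phi> h" unfolding ValTrades_def using hl by simp
    qed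
    show "ValTrades \<phi> h \<subseteq> ValTrades' ?C h"
    proof
      fix s assume "s \<in> ValTrades \<phi> h"
      then have "\<phi> (qh h + s) = \<phi> q0" unfolding ValTrades_def using hl by simp
      then have "\<phi> (0 *\<^sub>R onevec - (- qh h - s)) = \<phi> q0" by (simp add: add.commute)
      then have "?C (- qh h - s) = 0" using chr by blast
      then have "s = s + (?C (- qh h - s) - ?C (- qh h)) *\<^sub>R onevec" using C0 by simp
      then show "s \<in> ValTrades' ?C h" unfolding ValTrades'_def by blast
    qed
  qed
qed

end
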